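(* Consider the labeled Galton–Watson tree $\mathcal{T}$ with $\omega<\omega_0$, where $\omega_0=1/\tau$ and $\tau=\frac{1}{r(a+b)}\sum_{\ell\in\mathcal{L}}|a\mu(\ell)-b\nu(\ell)|$. Then as $R\to\infty$, for all $x\in\{1,\dots,r\}$, \[\mathbb{P}(\sigma_\rho=x\mid\mathcal{T},\sigma_{\partial\mathcal{T}_R})\to\frac1r\] asymptotically almost surely (in probability).
   Context: Labeled Galton–Watson tree $\mathcal{T}$ with root $\rho$, parameters $r\ge2$, positive constants $a,b$, $\omega>0$, finite label set $\mathcal{L}$ and distinct probability measures $\mu,\nu$ on $\mathcal{L}$: each node has a Poisson number of children with mean $d=\omega\frac{a+(r-1)b}{r(a+b)}$; the root's attribute $\sigma_\rho$ is uniform on $\{1,\dots,r\}$; each child independently has its parent's attribute with probability $\frac{a}{a+(r-1)b}$ and each of the $r-1$ other attributes with probability $\frac{b}{a+(r-1)b}$; each parent–child edge is independently labeled with distribution $\mu$ if the two attributes agree and $\nu$ otherwise. $\mathcal{T}_R$ is the tree truncated at depth $R$, $\partial\mathcal{T}_R$ its nodes at depth $R$, and $\sigma_{\partial\mathcal{T}_R}$ their attributes; conditioning on $\mathcal{T}$ means on the tree structure together with its edge labels. *)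

theory Defs
  imports "HOL-Probability.Probability"
begin

datatype ('a, 'l) ltree = Node 'a "('l \<times> ('a, 'l) ltree) list"

fun root_attr :: "('a, 'l) ltree \<Rightarrow> 'a" where
  "root_attr (Node x cs) = x"

definition gw_d :: "nat \<Rightarrow> real \<Rightarrow> real \<Rightarrow> real \<Rightarrow> real" where
  "gw_d r a b \<omega> = \<omega> * (a + (real r - 1) * b) / (real r * (a + b))"

text \<open>Attribute of a child of a parent with attribute x: same attribute with
probability a/(a+(r-1)b), otherwise uniform over the r-1 other attributes
(so each other attribute has probability b/(a+(r-1)b)).\<close>
definition child_attr :: "nat \<Rightarrow> real \<Rightarrow> real \<Rightarrow> nat \<Rightarrow> nat pmf" where
  "child_attr r a b x =
     bind_pmf (bernoulli_pmf (a / (a + (real r - 1) * b)))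
       (\<lambda>same. if same then return_pmf x else pmf_of_set ({1..r} - {x}))"

fun gw_tree :: "nat \<Rightarrow> real \<Rightarrow> real \<Rightarrow> real \<Rightarrow> 'l pmf \<Rightarrow> 'l pmf \<Rightarrow> nat \<Rightarrow> nat
                 \<Rightarrow> (nat, 'l) ltree pmf" where
  "gw_tree r a b \<omega> \<mu> \<nu> 0 x = return_pmf (Node x [])"
| "gw_tree r a b \<omega> \<mu> \<nu> (Suc R) x =
     bind_pmf (poisson_pmf (gw_d r a b \<omega>)) (\<lambda>k.
     map_pmf (Node x)
       (replicate_pmf k
          (bind_pmf (child_attr r a b x) (\<lambda>y.
           bind_pmf (if y = x then \<mu> else \<nu>) (\<lambda>l.
           map_pmf (\<lambda>t. (l, t)) (gw_tree r a b \<omega> \<mu> \<nu> R y))))))"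

definition gw_joint :: "nat \<Rightarrow> real \<Rightarrow> real \<Rightarrow> real \<Rightarrow> 'l pmf \<Rightarrow> 'l pmf \<Rightarrow> nat
                 \<Rightarrow> (nat, 'l) ltree pmf" where
  "gw_joint r a b \<omega> \<mu> \<nu> R = bind_pmf (pmf_of_set {1..r}) (gw_tree r a b \<omega> \<mu> \<nu> R)"

text \<open>Observation (T_R, sigma on the boundary of T_R): tree structure and
edge labels, with attributes erased except at the nodes at depth R.\<close>
fun observe :: "nat \<Rightarrow> ('a, 'l) ltree \<Rightarrow> ('a option, 'l) ltree" where
  "observe 0 (Node x cs) = Node (Some x) (map (\<lambda>(l, c). (l, observe 0 c)) cs)"
| "observe (Suc R) (Node x cs) = Node None (map (\<lambda>(l, c). (l, observe R c)) cs)"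

text \<open>P(sigma_rho = x | T_R, sigma_{boundary T_R}) evaluated at observation obs
(elementary conditional probability in the discrete joint law).\<close>
definition root_posterior :: "nat \<Rightarrow> real \<Rightarrow> real \<Rightarrow> real \<Rightarrow> 'l pmf \<Rightarrow> 'l pmf \<Rightarrow> nat
                 \<Rightarrow> (nat option, 'l) ltree \<Rightarrow> nat \<Rightarrow> real" where
  "root_posterior r a b \<omega> \<mu> \<nu> R obs x =
     measure_pmf.prob (gw_joint r a b \<omega> \<mu> \<nu> R) {t. root_attr t = x \<and> observe R t = obs}
     / measure_pmf.prob (gw_joint r a b \<omega> \<mu> \<nu> R) {t. observe R t = obs}"

definition gw_tau :: "nat \<Rightarrow> real \<Rightarrow> real \<Rightarrow> ('l::finite) pmf \<Rightarrow> 'l pmf \<Rightarrow> real" where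
  "gw_tau r a b \<mu> \<nu> = (1 / (real r * (a + b))) * (\<Sum>l\<in>UNIV. \<bar>a * pmf \<mu> l - b * pmf \<nu> l\<bar>)"

end

theory Submission
  imports Defs
begin


definition D :: "'a pmf \<Rightarrow> 'a pmf \<Rightarrow> ennreal" where
  "D p q = (\<integral>\<^sup>+ w. ennreal \<bar>pmf p w - pmf q w\<bar> \<partial>count_space UNIV)"

lemma nn_swap:
  "(\<integral>\<^sup>+ x. \<integral>\<^sup>+ y. f x y \<partial>count_space UNIV \<partial>count_space UNIV) =
   (\<integral>\<^sup>+ y. \<integral>\<^sup>+ x. f x y \<partial>count_space UNIV \<partial>count_space UNIV)"
proof -
  have "(\<integral>\<^sup>+ x. \<integral>\<^sup>+ y. f x y \<partial>count_space UNIV \<partial>count_space UNIV) =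
       integral\<^sup>N (count_space UNIV) (\<lambda>(x,y). f x y)"
    using nn_integral_fst_count_space[of "\<lambda>(x,y). f x y"] by simp
  also have "\<dots> = (\<integral>\<^sup>+ y. \<integral>\<^sup>+ x. f x y \<partial>count_space UNIV \<partial>count_space UNIV)"
    using nn_integral_snd_count_space[of "\<lambda>(x,y). f x y"] by simp
  finally show ?thesis .
qed

lemma absdiff_le:
  fixes u v :: "'a \<Rightarrow> real"
  assumes "\<And>x. u x \<ge> 0" "\<And>x. v x \<ge> 0" "a \<ge> 0" "b \<ge> 0"
    and "ennreal a = (\<integral>\<^sup>+ x. ennreal (u x) \<partial>count_space UNIV)"
    and "ennreal b = (\<integral>\<^sup>+ x. ennreal (v x) \<partial>count_space UNIV)"
  shows "ennreal \<bar>a - b\<bar> \<le> (\<integral>\<^sup>+ x. ennreal \<bar>u x - v x\<bar> \<partial>count_space UNIV)"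
proof -
  let ?C = "(\<integral>\<^sup>+ x. ennreal \<bar>u x - v x\<bar> \<partial>count_space UNIV)"
  have 1: "ennreal a \<le> ennreal b + ?C"
  proof -
    have "ennreal a \<le> (\<integral>\<^sup>+ x. ennreal (v x) + ennreal \<bar>u x - v x\<bar> \<partial>count_space UNIV)"
      unfolding assms(5) by (intro nn_integral_mono) (use assms in \<open>auto simp: ennreal_plus[symmetric] simp del: ennreal_plus\<close>)
    also have "\<dots> = ennreal b + ?C" by (simp add: nn_integral_add assms(6))
    finally show ?thesis .
  qed
  have 2: "ennreal b \<le> ennreal a + ?C"
  proof -
    have "ennreal b \<le> (\<integral>\<^sup>+ x. ennreal (u x) + ennreal \<bar>u x - v x\<bar> \<partial>count_space UNIV)"
      unfolding assms(6) by (intro nn_integral_mono) (use assms in \<open>auto simp: ennreal_plus[symmetric] simp del: ennreal_plus\<close>)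
    also have "\<dots> = ennreal a + ?C" by (simp add: nn_integral_add assms(5))
    finally show ?thesis .
  qed
  show ?thesis
  proof (cases "?C = \<top>")
    case True then show ?thesis by simp
  next
    case False
    then obtain c where c: "?C = ennreal c" "c \<ge> 0" by (cases ?C) auto
    from 1 2 c assms(3,4) have "a \<le> b + c" "b \<le> a + c"
      by (simp_all add: ennreal_plus[symmetric] del: ennreal_plus)
    then show ?thesis using c by (auto intro: ennreal_leI)
  qed
qed

lemma ennreal_pmf_bind':
  "ennreal (pmf (bind_pmf p f) w) = (\<integral>\<^sup>+ x. ennreal (pmf p x * pmf (f x) w) \<partial>count_space UNIV)"
  by (simp add: ennreal_pmf_bind nn_integral_measure_pmf ennreal_mult)

lemma D_bind:
  "D (bind_pmf p f) (bind_pmf q g) \<le>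
   (\<integral>\<^sup>+ x. \<integral>\<^sup>+ w. ennreal \<bar>pmf p x * pmf (f x) w - pmf q x * pmf (g x) w\<bar>
      \<partial>count_space UNIV \<partial>count_space UNIV)"
proof -
  have "D (bind_pmf p f) (bind_pmf q g) \<le>
     (\<integral>\<^sup>+ w. \<integral>\<^sup>+ x. ennreal \<bar>pmf p x * pmf (f x) w - pmf q x * pmf (g x) w\<bar>
      \<partial>count_space UNIV \<partial>count_space UNIV)"
    unfolding D_def
    by (intro nn_integral_mono absdiff_le) (simp_all add: ennreal_pmf_bind')
  also have "\<dots> = (\<integral>\<^sup>+ x. \<integral>\<^sup>+ w. ennreal \<bar>pmf p x * pmf (f x) w - pmf q x * pmf (g x) w\<bar>
      \<partial>count_space UNIV \<partial>count_space UNIV)" by (rule nn_swap)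
  finally show ?thesis .
qed

lemma nn_pmf_1: "(\<integral>\<^sup>+ w. ennreal (pmf p w) \<partial>count_space UNIV) = 1"
  by (simp add: nn_integral_pmf emeasure_pmf)

lemma D_bind_same_kernel: "D (bind_pmf p f) (bind_pmf q f) \<le> D p q"
proof -
  have "D (bind_pmf p f) (bind_pmf q f) \<le>
   (\<integral>\<^sup>+ x. \<integral>\<^sup>+ w. ennreal \<bar>pmf p x - pmf q x\<bar> * ennreal (pmf (f x) w)
      \<partial>count_space UNIV \<partial>count_space UNIV)"
    by (rule order.trans[OF D_bind]) (simp add: left_diff_distrib[symmetric] abs_mult ennreal_mult)
  also have "\<dots> = D p q"
    by (simp add: nn_integral_cmult nn_pmf_1 D_def)
  finally show ?thesis .
qed

lemma D_bind_same: "D (bind_pmf p f) (bind_pmf p g) \<le> (\<integral>\<^sup>+ x. D (f x) (g x) \<partial>measure_pmf p)"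
proof -
  have "D (bind_pmf p f) (bind_pmf p g) \<le>
   (\<integral>\<^sup>+ x. \<integral>\<^sup>+ w. ennreal (pmf p x) * ennreal \<bar>pmf (f x) w - pmf (g x) w\<bar>
      \<partial>count_space UNIV \<partial>count_space UNIV)"
    by (rule order.trans[OF D_bind]) (simp add: right_diff_distrib[symmetric] abs_mult ennreal_mult)
  also have "\<dots> = (\<integral>\<^sup>+ x. D (f x) (g x) \<partial>measure_pmf p)"
    by (simp add: nn_integral_cmult D_def nn_integral_measure_pmf)
  finally show ?thesis .
qed

lemma D_map: "D (map_pmf h p) (map_pmf h q) \<le> D p q"
  unfolding map_pmf_def by (rule D_bind_same_kernel)

lemma D_le2: "D p q \<le> 2"
proof -
  have "D p q \<le> (\<integral>\<^sup>+ w. ennreal (pmf p w) + ennreal (pmf q w) \<partial>count_space UNIV)"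
    unfolding D_def by (intro nn_integral_mono) (simp add: ennreal_plus[symmetric] abs_le_iff pmf_nonneg add_increasing add_increasing2 del: ennreal_plus)
  also have "\<dots> = 2" by (simp add: nn_integral_add nn_pmf_1)
  finally show ?thesis .
qed

lemma D_self[simp]: "D p p = 0" by (simp add: D_def)

lemma D_triangle: "D p s \<le> D p q + D q s"
proof -
  have "D p s \<le> (\<integral>\<^sup>+ w. ennreal \<bar>pmf p w - pmf q w\<bar> + ennreal \<bar>pmf q w - pmf s w\<bar> \<partial>count_space UNIV)"
    unfolding D_def by (intro nn_integral_mono) (simp add: ennreal_plus[symmetric] del: ennreal_plus)
  also have "\<dots> = D p q + D q s" by (simp add: nn_integral_add D_def)
  finally show ?thesis .
qed

lemma D_replicate: "D (replicate_pmf k p) (replicate_pmf k q) \<le> of_nat k * D p q"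
proof (induction k)
  case 0 then show ?case by simp
next
  case (Suc k)
  let ?F = "\<lambda>A x. bind_pmf A (\<lambda>xs. return_pmf (x#xs))"
  have "D (replicate_pmf (Suc k) p) (replicate_pmf (Suc k) q) \<le>
        D (bind_pmf p (?F (replicate_pmf k p))) (bind_pmf q (?F (replicate_pmf k p))) +
        D (bind_pmf q (?F (replicate_pmf k p))) (bind_pmf q (?F (replicate_pmf k q)))"
    by (simp add: D_triangle)
  also have "\<dots> \<le> D p q + of_nat k * D p q"
  proof (intro add_mono D_bind_same_kernel)
    have "D (bind_pmf q (?F (replicate_pmf k p))) (bind_pmf q (?F (replicate_pmf k q)))
       \<le> (\<integral>\<^sup>+ x. D (?F (replicate_pmf k p) x) (?F (replicate_pmf k q) x) \<partial>measure_pmf q)"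
      by (rule D_bind_same)
    also have "\<dots> \<le> (\<integral>\<^sup>+ x. of_nat k * D p q \<partial>measure_pmf q)"
      by (intro nn_integral_mono order.trans[OF D_bind_same_kernel Suc.IH])
    also have "\<dots> = of_nat k * D p q" by (simp add: measure_pmf.emeasure_space_1)
    finally show "D (bind_pmf q (?F (replicate_pmf k p))) (bind_pmf q (?F (replicate_pmf k q))) \<le> of_nat k * D p q" .
  qed
  finally show ?case by (simp add: algebra_simps)
qed



lemma poisson_mean:
  assumes d: "d > 0"
  shows "(\<integral>\<^sup>+ k. of_nat k \<partial>measure_pmf (poisson_pmf d)) = ennreal d"
proof -
  define f where "f n = d ^ n / fact n * exp (-d) * real n" for n
  have f0: "\<And>n. f n \<ge> 0" using d by (simp add: f_def)
  have "(\<lambda>n. d ^ n /\<^sub>R fact n) sums exp d" by (rule exp_converges)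
  then have "(\<lambda>n. d * exp (-d) * (d ^ n /\<^sub>R fact n)) sums (d * exp (-d) * exp d)"
    by (rule sums_mult)
  moreover have "(\<lambda>n. f (Suc n)) = (\<lambda>n. d * exp (-d) * (d ^ n /\<^sub>R fact n))"
    by (rule ext) (simp add: f_def divide_simps)
  moreover have "d * exp (-d) * exp d = d" by (simp add: exp_minus)
  ultimately have "(\<lambda>n. f (Suc n)) sums d"
    by simp
  then have "f sums (d + f 0)" by (simp only: sums_Suc_iff)
  then have "f sums d" by (simp add: f_def)
  then have "(\<Sum>n. ennreal (f n)) = ennreal d" by (rule suminf_ennreal_eq[OF f0])
  moreover have "(\<integral>\<^sup>+ k. of_nat k \<partial>measure_pmf (poisson_pmf d)) = (\<Sum>n. ennreal (f n))"
    using d by (simp add: nn_integral_measure_pmf nn_integral_count_space_nat f_def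
        ennreal_of_nat_eq_real_of_nat ennreal_mult'[symmetric] mult_ac)
  ultimately show ?thesis by simp
qed



lemma map_replicate_pmf:
  "map_pmf (map g) (replicate_pmf k p) = replicate_pmf k (map_pmf g p)"
proof (induction k)
  case 0 then show ?case by simp
next
  case (Suc k) then show ?case by (simp add: map_bind_pmf bind_map_pmf flip: Suc.IH)
qed

lemma observe_Suc_Node:
  "observe (Suc R) \<circ> Node x = Node None \<circ> map (\<lambda>(l, c). (l, observe R c))"
  by (rule ext) simp

context
  fixes r :: nat and a b \<omega> :: real and \<mu> \<nu> :: "('l::finite) pmf"
  assumes r2: "r \<ge> 2" and apos: "a > 0" and bpos: "b > 0" and wpos: "\<omega> > 0"
begin

abbreviation "s \<equiv> a + (real r - 1) * b"
abbreviation "P R z \<equiv> map_pmf (observe R) (gw_tree r a b \<omega> \<mu> \<nu> R z)"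
abbreviation "lab x z \<equiv> (if z = x then \<mu> else \<nu>)"
abbreviation "Q R x \<equiv> bind_pmf (child_attr r a b x) (\<lambda>z. bind_pmf (lab x z) (\<lambda>l. map_pmf (Pair l) (P R z)))"

lemma obs_step:
  "P (Suc R) x = bind_pmf (poisson_pmf (gw_d r a b \<omega>)) (\<lambda>k. map_pmf (Node None) (replicate_pmf k (Q R x)))"
proof -
  let ?h = "\<lambda>(l, c). (l, observe R c)"
  let ?Q' = "bind_pmf (child_attr r a b x) (\<lambda>z. bind_pmf (lab x z) (\<lambda>l. map_pmf (Pair l) (gw_tree r a b \<omega> \<mu> \<nu> R z)))"
  have "P (Suc R) x = bind_pmf (poisson_pmf (gw_d r a b \<omega>)) (\<lambda>k. map_pmf (observe (Suc R) \<circ> Node x) (replicate_pmf k ?Q'))"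
    by (simp add: map_bind_pmf pmf.map_comp)
  also have "\<dots> = bind_pmf (poisson_pmf (gw_d r a b \<omega>)) (\<lambda>k. map_pmf (Node None) (map_pmf (map ?h) (replicate_pmf k ?Q')))"
    by (simp only: observe_Suc_Node pmf.map_comp)
  also have "\<dots> = bind_pmf (poisson_pmf (gw_d r a b \<omega>)) (\<lambda>k. map_pmf (Node None) (replicate_pmf k (map_pmf ?h ?Q')))"
    by (simp only: map_replicate_pmf)
  also have "map_pmf ?h ?Q' = Q R x"
    by (simp add: map_bind_pmf pmf.map_comp o_def)
  finally show ?thesis .
qed

lemma s_pos: "s > 0"
proof -
  have "real r - 1 \<ge> 0" using r2 by simp
  then have "(real r - 1) * b \<ge> 0" using bpos by simp
  then show ?thesis using apos by simp
qed

lemma pmf_child: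
  assumes x: "x \<in> {1..r}"
  shows "pmf (child_attr r a b x) z = (if z = x then a / s else if z \<in> {1..r} then b / s else 0)"
proof -
  have sp: "s > 0" by (rule s_pos)
  have p01: "0 \<le> a / s" "a / s \<le> 1" using sp apos bpos r2 by (auto simp: divide_simps)
  have ne: "{1..r} - {x} \<noteq> {}"
  proof -
    have "(if x = 1 then 2 else 1) \<in> {1..r} - {x}" using r2 x by auto
    then show ?thesis by blast
  qed
  have card: "real (card ({1..r} - {x})) = real r - 1" using x r2 by (simp add: of_nat_diff)
  have r1: "real r - 1 > 0" using r2 by simp
  have om: "1 - a / s = (real r - 1) * b / s" using sp by (simp add: field_simps)
  have "pmf (child_attr r a b x) z =
      (a / s) * pmf (return_pmf x) z + (1 - a / s) * pmf (pmf_of_set ({1..r} - {x})) z"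
    unfolding child_attr_def pmf_bind
    by (subst integral_measure_pmf[of UNIV]) (auto simp: UNIV_bool p01 add.commute)
  also have "\<dots> = (if z = x then a / s else if z \<in> {1..r} then b / s else 0)"
  proof (cases "z = x")
    case True
    have "pmf (pmf_of_set ({1..r} - {x})) x = 0" by (subst pmf_of_set) (use ne in auto)
    then show ?thesis using True by simp
  next
    case False
    have card': "real (card ({Suc 0..r} - {x})) = real r - 1" using card by simp
    have "pmf (pmf_of_set ({1..r} - {x})) z = (if z \<in> {1..r} then 1 / (real r - 1) else 0)"
      by (subst pmf_of_set) (use ne card' False in \<open>auto simp: indicator_def\<close>)
    then have "(1 - a / s) * pmf (pmf_of_set ({1..r} - {x})) z = (if z \<in> {1..r} then (real r - 1) * b / s / (real r - 1) else 0)"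
      by (simp add: om)
    also have "(real r - 1) * b / s / (real r - 1) = b / s" using r1 by simp
    finally show ?thesis using False by simp
  qed
  finally show ?thesis .
qed

lemma set_child: assumes x: "x \<in> {1..r}" shows "set_pmf (child_attr r a b x) \<subseteq> {1..r}"
proof
  fix z assume "z \<in> set_pmf (child_attr r a b x)"
  then have "pmf (child_attr r a b x) z \<noteq> 0" by (simp add: set_pmf_iff)
  then show "z \<in> {1..r}" unfolding pmf_child[OF x] using x by (auto split: if_splits)
qed

lemma pmf_Q_sum:
  assumes x: "x \<in> {1..r}"
  shows "pmf (Q R x) (l, w) = (\<Sum>z\<in>{1..r}. pmf (child_attr r a b x) z * (pmf (lab x z) l * pmf (P R z) w))"
proof -
  have inner: "pmf (bind_pmf (lab x z) (\<lambda>l. map_pmf (Pair l) (P R z))) (l, w) = pmf (lab x z) l * pmf (P R z) w" for z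
  proof -
    have "bind_pmf (lab x z) (\<lambda>l. map_pmf (Pair l) (P R z)) = pair_pmf (lab x z) (P R z)"
      by (simp add: pair_pmf_def map_pmf_def[of "Pair _"])
    then show ?thesis by (simp add: pmf_pair)
  qed
  show ?thesis
    unfolding pmf_bind[of "child_attr r a b x"] inner
    by (subst integral_measure_pmf[of "{1..r}"]) (use set_child[OF x] in auto)
qed

lemma pmf_Q:
  assumes x: "x \<in> {1..r}"
  shows "pmf (Q R x) (l, w) = (a * pmf \<mu> l - b * pmf \<nu> l) / s * pmf (P R x) w
            + b * pmf \<nu> l / s * (\<Sum>z\<in>{1..r}. pmf (P R z) w)"
proof -
  let ?f = "\<lambda>z. pmf (child_attr r a b x) z * (pmf (lab x z) l * pmf (P R z) w)"
  have "pmf (Q R x) (l, w) = ?f x + (\<Sum>z\<in>{1..r} - {x}. ?f z)"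
    unfolding pmf_Q_sum[OF x] using x by (simp add: sum.remove)
  also have "(\<Sum>z\<in>{1..r} - {x}. ?f z) = (\<Sum>z\<in>{1..r} - {x}. b * pmf \<nu> l / s * pmf (P R z) w)"
    by (intro sum.cong) (auto simp: pmf_child[OF x])
  also have "\<dots> = b * pmf \<nu> l / s * (\<Sum>z\<in>{1..r} - {x}. pmf (P R z) w)"
    by (rule sum_distrib_left[symmetric])
  also have "(\<Sum>z\<in>{1..r} - {x}. pmf (P R z) w) = (\<Sum>z\<in>{1..r}. pmf (P R z) w) - pmf (P R x) w"
    using x by (simp add: sum_diff1)
  also have "?f x = a * pmf \<mu> l / s * pmf (P R x) w"
    by (simp add: pmf_child[OF x])
  finally show ?thesis
    by (simp add: diff_divide_distrib algebra_simps)
qed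


lemma D_Q:
  assumes x: "x \<in> {1..r}" and y: "y \<in> {1..r}"
  shows "D (Q R x) (Q R y) = ennreal (\<Sum>l\<in>UNIV. \<bar>a * pmf \<mu> l - b * pmf \<nu> l\<bar> / s) * D (P R x) (P R y)"
proof -
  let ?c = "\<lambda>l. (a * pmf \<mu> l - b * pmf \<nu> l) / s"
  have pt: "\<bar>pmf (Q R x) (l, w) - pmf (Q R y) (l, w)\<bar> = \<bar>?c l\<bar> * \<bar>pmf (P R x) w - pmf (P R y) w\<bar>" for l w
  proof -
    have "pmf (Q R x) (l, w) - pmf (Q R y) (l, w) = ?c l * (pmf (P R x) w - pmf (P R y) w)"
      unfolding pmf_Q[OF x] pmf_Q[OF y] by (simp add: algebra_simps)
    then show ?thesis by (simp add: abs_mult)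
  qed
  have "D (Q R x) (Q R y) = (\<integral>\<^sup>+ l. \<integral>\<^sup>+ w. ennreal \<bar>pmf (Q R x) (l, w) - pmf (Q R y) (l, w)\<bar>
      \<partial>count_space UNIV \<partial>count_space UNIV)"
    unfolding D_def by (rule nn_integral_fst_count_space[symmetric])
  also have "\<dots> = (\<integral>\<^sup>+ l. ennreal \<bar>?c l\<bar> * D (P R x) (P R y) \<partial>count_space UNIV)"
    apply (intro nn_integral_cong)
    apply (simp only: pt ennreal_mult[OF abs_ge_zero abs_ge_zero] D_def)
    apply (rule nn_integral_cmult)
    apply simp
    done
  also have "\<dots> = (\<Sum>l\<in>UNIV. ennreal \<bar>?c l\<bar>) * D (P R x) (P R y)"
    by (simp only: nn_integral_count_space_finite[OF finite] sum_distrib_right)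
  also have "(\<Sum>l\<in>UNIV. ennreal \<bar>?c l\<bar>) = ennreal (\<Sum>l\<in>UNIV. \<bar>?c l\<bar>)"
    by (rule sum_ennreal) simp
  also have "(\<Sum>l\<in>UNIV. \<bar>?c l\<bar>) = (\<Sum>l\<in>UNIV. \<bar>a * pmf \<mu> l - b * pmf \<nu> l\<bar> / s)"
    using s_pos by (intro sum.cong) (auto simp: abs_div)
  finally show ?thesis .
qed

lemma d_pos: "gw_d r a b \<omega> > 0"
  unfolding gw_d_def using s_pos wpos apos bpos r2 by simp

lemma dc_eq: "gw_d r a b \<omega> * (\<Sum>l\<in>UNIV. \<bar>a * pmf \<mu> l - b * pmf \<nu> l\<bar> / s) = \<omega> * gw_tau r a b \<mu> \<nu>"
proof -
  have g: "\<And>s' X R :: real. s' \<noteq> 0 \<Longrightarrow> \<omega> * s' / R * (X / s') = \<omega> * X / R" by simp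
  show ?thesis
    unfolding gw_d_def gw_tau_def sum_divide_distrib[symmetric]
    using g[of s] s_pos by simp
qed

lemma tau_nonneg: "gw_tau r a b \<mu> \<nu> \<ge> 0"
  unfolding gw_tau_def using apos bpos by (simp add: sum_nonneg)

lemma D_step:
  assumes x: "x \<in> {1..r}" and y: "y \<in> {1..r}"
  shows "D (P (Suc R) x) (P (Suc R) y) \<le> ennreal (\<omega> * gw_tau r a b \<mu> \<nu>) * D (P R x) (P R y)"
proof -
  let ?d = "gw_d r a b \<omega>"
  let ?c = "(\<Sum>l\<in>UNIV. \<bar>a * pmf \<mu> l - b * pmf \<nu> l\<bar> / s)"
  have "D (P (Suc R) x) (P (Suc R) y) \<le>
     (\<integral>\<^sup>+ k. D (map_pmf (Node None) (replicate_pmf k (Q R x))) (map_pmf (Node None) (replicate_pmf k (Q R y)))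
        \<partial>measure_pmf (poisson_pmf ?d))"
    unfolding obs_step by (rule D_bind_same)
  also have "\<dots> \<le> (\<integral>\<^sup>+ k. of_nat k * D (Q R x) (Q R y) \<partial>measure_pmf (poisson_pmf ?d))"
    by (intro nn_integral_mono order.trans[OF D_map D_replicate])
  also have "\<dots> = ennreal ?d * D (Q R x) (Q R y)"
    by (simp add: nn_integral_multc poisson_mean[OF d_pos])
  also have "\<dots> = ennreal ?d * ennreal ?c * D (P R x) (P R y)"
    by (simp add: D_Q[OF x y] mult.assoc)
  also have "ennreal ?d * ennreal ?c = ennreal (\<omega> * gw_tau r a b \<mu> \<nu>)"
  proof -
    have "?c \<ge> 0" by (intro sum_nonneg divide_nonneg_nonneg) (use s_pos in auto)
    then have "ennreal ?d * ennreal ?c = ennreal (?d * ?c)" using d_pos ennreal_mult[of ?d ?c] by simp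
    then show ?thesis by (simp add: dc_eq)
  qed
  finally show ?thesis .
qed

lemma D_bound:
  assumes x: "x \<in> {1..r}" and y: "y \<in> {1..r}"
  shows "D (P R x) (P R y) \<le> 2 * ennreal (\<omega> * gw_tau r a b \<mu> \<nu>) ^ R"
proof (induction R)
  case 0 then show ?case by (simp add: D_le2)
next
  case (Suc R)
  have "D (P (Suc R) x) (P (Suc R) y) \<le> ennreal (\<omega> * gw_tau r a b \<mu> \<nu>) * D (P R x) (P R y)"
    by (rule D_step[OF x y])
  also have "\<dots> \<le> ennreal (\<omega> * gw_tau r a b \<mu> \<nu>) * (2 * ennreal (\<omega> * gw_tau r a b \<mu> \<nu>) ^ R)"
    by (intro mult_left_mono Suc.IH) simp
  finally show ?case by (simp add: mult_ac)
qed

end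


lemma root_gw_tree: "t \<in> set_pmf (gw_tree r a b \<omega> \<mu> \<nu> R z) \<Longrightarrow> root_attr t = z"
  by (cases R) auto

lemma num_eq:
  assumes r: "r \<ge> 1"
  shows "measure_pmf.prob (gw_joint r a b \<omega> \<mu> \<nu> R) {t. root_attr t = x \<and> observe R t = w}
    = (if x \<in> {1..r} then pmf (map_pmf (observe R) (gw_tree r a b \<omega> \<mu> \<nu> R x)) w / real r else 0)"
proof -
  let ?g = "\<lambda>t. (root_attr t, observe R t)"
  have "measure_pmf.prob (gw_joint r a b \<omega> \<mu> \<nu> R) {t. root_attr t = x \<and> observe R t = w}
      = pmf (map_pmf ?g (gw_joint r a b \<omega> \<mu> \<nu> R)) (x, w)"
    by (simp add: pmf_map vimage_def)
  also have "map_pmf ?g (gw_joint r a b \<omega> \<mu> \<nu> R) =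
      bind_pmf (pmf_of_set {1..r}) (\<lambda>z. map_pmf (Pair z) (map_pmf (observe R) (gw_tree r a b \<omega> \<mu> \<nu> R z)))"
    unfolding gw_joint_def map_bind_pmf pmf.map_comp
    by (intro bind_pmf_cong refl map_pmf_cong) (auto simp: root_gw_tree)
  also have "pmf \<dots> (x, w) = (\<Sum>z\<in>{1..r}. pmf (map_pmf (Pair z) (map_pmf (observe R) (gw_tree r a b \<omega> \<mu> \<nu> R z))) (x, w)) / real r"
    using r by (simp add: pmf_bind integral_pmf_of_set)
  also have "\<dots> = (\<Sum>z\<in>{1..r}. if z = x then pmf (map_pmf (observe R) (gw_tree r a b \<omega> \<mu> \<nu> R z)) w else 0) / real r"
    by (intro arg_cong[where f="\<lambda>u. u / real r"] sum.cong refl)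
       (auto simp: pmf_map[of "Pair _"] vimage_def measure_pmf_single[symmetric])
  also have "\<dots> = (if x \<in> {1..r} then pmf (map_pmf (observe R) (gw_tree r a b \<omega> \<mu> \<nu> R x)) w / real r else 0)"
    by (simp add: sum.delta)
  finally show ?thesis .
qed

lemma den_eq:
  assumes r: "r \<ge> 1"
  shows "measure_pmf.prob (gw_joint r a b \<omega> \<mu> \<nu> R) {t. observe R t = w}
    = pmf (map_pmf (observe R) (gw_joint r a b \<omega> \<mu> \<nu> R)) w"
  by (simp add: pmf_map vimage_def)


theorem lemma2:
  fixes r :: nat and a b \<omega> :: real and \<mu> \<nu> :: "('l::finite) pmf" and x :: nat
  assumes "r \<ge> 2" and "a > 0" and "b > 0" and "\<omega> > 0" and "\<mu> \<noteq> \<nu>"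
    and "\<omega> < 1 / gw_tau r a b \<mu> \<nu>"
    and "x \<in> {1..r}"
  shows "\<forall>\<epsilon>>0. (\<lambda>R. measure_pmf.prob (gw_joint r a b \<omega> \<mu> \<nu> R)
            {t. \<bar>root_posterior r a b \<omega> \<mu> \<nu> R (observe R t) x - 1 / real r\<bar> > \<epsilon>})
          \<longlonglongrightarrow> 0"
proof (intro allI impI)
  note hyp = assms(1-4)
  have r2: "r \<ge> 2" and x: "x \<in> {1..r}" using assms by auto
  have r1: "r \<ge> 1" and rpos: "real r > 0" using r2 by auto
  fix \<epsilon> :: real assume eps: "\<epsilon> > 0"
  define \<tau> where "\<tau> = gw_tau r a b \<mu> \<nu>"
  define q where "q = \<omega> * \<tau>"
  have tau0: "\<tau> \<ge> 0" unfolding \<tau>_def by (rule tau_nonneg[OF hyp])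
  have taupos: "\<tau> > 0"
  proof (rule ccontr)
    assume "\<not> \<tau> > 0" then have "\<tau> = 0" using tau0 by simp
    then show False using assms(4,6) by (simp add: \<tau>_def)
  qed
  have q0: "q \<ge> 0" using tau0 assms(4) by (simp add: q_def)
  have q1: "q < 1" using assms(6) taupos by (simp add: q_def \<tau>_def field_simps)
  have key: "measure_pmf.prob (gw_joint r a b \<omega> \<mu> \<nu> R)
            {t. \<bar>root_posterior r a b \<omega> \<mu> \<nu> R (observe R t) x - 1 / real r\<bar> > \<epsilon>}
          \<le> 2 * q ^ R / (\<epsilon> * real r)" for R
  proof -
    define J where "J = gw_joint r a b \<omega> \<mu> \<nu> R"
    define M where "M = map_pmf (observe R) J"
    define L where "L z = map_pmf (observe R) (gw_tree r a b \<omega> \<mu> \<nu> R z)" for z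
    define E where "E = {w. \<bar>root_posterior r a b \<omega> \<mu> \<nu> R w x - 1 / real r\<bar> > \<epsilon>}"
    have prob_eq: "measure_pmf.prob J {t. \<bar>root_posterior r a b \<omega> \<mu> \<nu> R (observe R t) x - 1 / real r\<bar> > \<epsilon>}
        = measure_pmf.prob M E"
      by (simp add: M_def E_def vimage_def)
    have post: "root_posterior r a b \<omega> \<mu> \<nu> R w x = (pmf (L x) w / real r) / pmf M w" for w
      unfolding root_posterior_def num_eq[OF r1] den_eq[OF r1] using x by (simp add: L_def M_def J_def)
    have pt: "ennreal (pmf M w * indicator E w * (\<epsilon> * real r)) \<le> ennreal \<bar>pmf (L x) w - pmf M w\<bar>" for w
    proof (cases "w \<in> E \<and> pmf M w > 0")
      case True
      then have "\<bar>(pmf (L x) w / real r) / pmf M w - 1 / real r\<bar> > \<epsilon>"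
        using post[of w] by (simp add: E_def)
      then have "\<bar>(pmf (L x) w / real r) / pmf M w - 1 / real r\<bar> * (real r * pmf M w) > \<epsilon> * (real r * pmf M w)"
        using True rpos by (intro mult_strict_right_mono) auto
      moreover have "\<bar>(pmf (L x) w / real r) / pmf M w - 1 / real r\<bar> * (real r * pmf M w) = \<bar>pmf (L x) w - pmf M w\<bar>"
      proof -
        have "\<bar>(pmf (L x) w / real r) / pmf M w - 1 / real r\<bar> * (real r * pmf M w)
            = \<bar>((pmf (L x) w / real r) / pmf M w - 1 / real r) * (real r * pmf M w)\<bar>"
          using True rpos by (simp add: abs_mult)
        also have "((pmf (L x) w / real r) / pmf M w - 1 / real r) * (real r * pmf M w) = pmf (L x) w - pmf M w"
          using True rpos by (simp add: field_simps)
        finally show ?thesis .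
      qed
      ultimately show ?thesis using True by (intro ennreal_leI) (simp add: mult_ac)
    next
      case False
      then have "pmf M w * indicator E w = 0" using pmf_nonneg[of M w]
        by (auto simp: indicator_def)
      then have "pmf M w * indicator E w * (\<epsilon> * real r) = 0" by simp
      then show ?thesis by (metis abs_ge_zero ennreal_leI)
    qed
    have emE: "emeasure (measure_pmf M) E = (\<integral>\<^sup>+ w. ennreal (pmf M w * indicator E w) \<partial>count_space UNIV)"
      by (simp add: nn_integral_pmf[symmetric] nn_integral_count_space_indicator ennreal_mult ennreal_indicator)
    have "emeasure (measure_pmf M) E * ennreal (\<epsilon> * real r)
        = (\<integral>\<^sup>+ w. ennreal (pmf M w * indicator E w * (\<epsilon> * real r)) \<partial>count_space UNIV)"
      unfolding emE using eps rpos
      by (simp add: nn_integral_multc[symmetric] ennreal_mult[symmetric])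
    also have "\<dots> \<le> D (L x) M"
      unfolding D_def by (intro nn_integral_mono pt)
    also have "D (L x) M \<le> ennreal (2 * q ^ R)"
    proof -
      have "M = bind_pmf (pmf_of_set {1..r}) L"
        unfolding M_def J_def gw_joint_def map_bind_pmf L_def by (rule refl)
      moreover have "L x = bind_pmf (pmf_of_set {1..r}) (\<lambda>_. L x)" by simp
      ultimately have "D (L x) M \<le> (\<integral>\<^sup>+ z. D (L x) (L z) \<partial>measure_pmf (pmf_of_set {1..r}))"
        using D_bind_same[of "pmf_of_set {1..r}" "\<lambda>_. L x" L] by simp
      also have "\<dots> \<le> (\<integral>\<^sup>+ z. 2 * ennreal q ^ R \<partial>measure_pmf (pmf_of_set {1..r}))"
      proof (intro nn_integral_mono_AE)
        show "AE z in measure_pmf (pmf_of_set {1..r}). D (L x) (L z) \<le> 2 * ennreal q ^ R"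
          using r1 by (auto simp: AE_measure_pmf_iff L_def q_def \<tau>_def intro!: D_bound[OF hyp x])
      qed
      also have "\<dots> = 2 * ennreal q ^ R" by (simp add: measure_pmf.emeasure_space_1)
      also have "\<dots> = ennreal (2 * q ^ R)" using q0 by (simp add: ennreal_mult ennreal_power)
      finally show ?thesis .
    qed
    finally have "ennreal (measure_pmf.prob M E * (\<epsilon> * real r)) \<le> ennreal (2 * q ^ R)"
      using eps rpos by (simp add: measure_pmf.emeasure_eq_measure ennreal_mult)
    then have "measure_pmf.prob M E * (\<epsilon> * real r) \<le> 2 * q ^ R"
      using q0 by (simp add: ennreal_le_iff)
    then show ?thesis unfolding prob_eq[unfolded J_def] using eps rpos
      by (simp add: field_simps)
  qed
  have lim: "(\<lambda>R. 2 * q ^ R / (\<epsilon> * real r)) \<longlonglongrightarrow> 0"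
    using q0 q1 eps rpos by (intro tendsto_eq_intros LIMSEQ_power_zero) auto
  show "(\<lambda>R. measure_pmf.prob (gw_joint r a b \<omega> \<mu> \<nu> R)
            {t. \<bar>root_posterior r a b \<omega> \<mu> \<nu> R (observe R t) x - 1 / real r\<bar> > \<epsilon>}) \<longlonglongrightarrow> 0"
    by (rule tendsto_sandwich[OF _ _ tendsto_const lim]) (use key in \<open>auto intro: always_eventually\<close>)
qed


end
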